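(* For every $E>0$ there exist even, non-quadratic $V_1,V_2\in\mathcal{UM}$ with $\deg(V_1,0)=\deg(V_2,0)=2$ such that $a(\theta)=b_E(\theta)$ for every $\theta\in(0,E)$. Moreover, $V_1,V_2$ can be chosen so that in addition $\sqrt{V_2''(0)/V_1''(0)}$ is irrational.
   Context: $\mathcal{UM}$: real-analytic $V:\mathbb R\to\mathbb R_{\ge0}$ with $V(0)=0$, $yV'(y)>0$ for $y\neq0$, $V(y)\to\infty$ as $y\to\pm\infty$; $\deg(V,0)$ is the least $m$ with $V^{(m)}(0)\ne0$; $V^{-1}$ is the inverse of $V|_{[0,\infty)}$. $a(\theta)=\int_0^{V_1^{-1}(\theta)}\frac{dy}{\sqrt2\sqrt{\theta-V_1(y)}}$ for $\theta>0$ and $b_E(\theta)=\int_0^{V_2^{-1}(E-\theta)}\frac{dy}{\sqrt2\sqrt{E-\theta-V_2(y)}}$ for $0\le\theta<E$. *)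

theory Defs
  imports "HOL-Analysis.Analysis"
begin

definition real_analytic :: "(real \<Rightarrow> real) \<Rightarrow> bool" where
  "real_analytic V \<longleftrightarrow>
     (\<forall>x. \<exists>r>0. \<exists>c::nat \<Rightarrow> real. \<forall>y. \<bar>y - x\<bar> < r \<longrightarrow> (\<lambda>n. c n * (y - x) ^ n) sums V y)"

definition UM :: "(real \<Rightarrow> real) \<Rightarrow> bool" where
  "UM V \<longleftrightarrow> real_analytic V \<and> (\<forall>y. V y \<ge> 0) \<and> V 0 = 0 \<and>
     (\<forall>y. y \<noteq> 0 \<longrightarrow> y * deriv V y > 0) \<and>
     filterlim V at_top at_top \<and> filterlim V at_top at_bot"

definition deg0 :: "(real \<Rightarrow> real) \<Rightarrow> nat" where
  "deg0 V = (LEAST m. (deriv ^^ m) V 0 \<noteq> 0)"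

definition Vinv :: "(real \<Rightarrow> real) \<Rightarrow> real \<Rightarrow> real" where
  "Vinv V x = (THE y. y \<ge> 0 \<and> V y = x)"

definition a_fun :: "(real \<Rightarrow> real) \<Rightarrow> real \<Rightarrow> real" where
  "a_fun V1 \<theta> = (LINT y:{0..Vinv V1 \<theta>}|lborel. 1 / (sqrt 2 * sqrt (\<theta> - V1 y)))"

definition b_fun :: "(real \<Rightarrow> real) \<Rightarrow> real \<Rightarrow> real \<Rightarrow> real" where
  "b_fun V2 E \<theta> = (LINT y:{0..Vinv V2 (E - \<theta>)}|lborel. 1 / (sqrt 2 * sqrt (E - \<theta> - V2 y)))"

definition even_fun :: "(real \<Rightarrow> real) \<Rightarrow> bool" where
  "even_fun V \<longleftrightarrow> (\<forall>y. V (- y) = V y)"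

definition quadratic_fun :: "(real \<Rightarrow> real) \<Rightarrow> bool" where
  "quadratic_fun V \<longleftrightarrow> (\<exists>c. \<forall>y. V y = c * y ^ 2)"

end

theory Submission
  imports Defs "HOL-Complex_Analysis.Complex_Analysis"
begin

lemma trig_int:
  fixes A B C :: real
  shows "((\<lambda>t. A + B * sin t ^ 2 + C * sin t ^ 4) has_integral (A*pi/2 + B*pi/4 + C*3*pi/16)) {0..pi/2}"
proof -
  define F where "F t = A*t + B*(t - sin t * cos t)/2 + C * (3 * t / 8 - 3 * sin t * cos t / 8 - sin t ^ 3 * cos t / 4)" for t
  have "((\<lambda>t. A + B * sin t ^ 2 + C * sin t ^ 4) has_integral (F (pi/2) - F 0)) {0..pi/2}"
  proof (rule fundamental_theorem_of_calculus)
    fix t :: real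
    have c: "cos t ^ 2 = 1 - sin t ^ 2" by (simp add: cos_squared_eq)
    have d: "(F has_real_derivative (A + B*(1 - (cos t * cos t - sin t * sin t))/2 +
       C*(3/8 - 3*(cos t * cos t - sin t * sin t)/8 - (3 * sin t^2 * cos t * cos t - sin t^3 * sin t)/4))) (at t)"
      unfolding F_def
      by (auto intro!: derivative_eq_intros simp: power2_eq_square power3_eq_cube) (simp add: field_simps; algebra)
    have eq: "A + B*(1 - (cos t * cos t - sin t * sin t))/2 +
       C*(3/8 - 3*(cos t * cos t - sin t * sin t)/8 - (3 * sin t^2 * cos t * cos t - sin t^3 * sin t)/4)
       = A + B * sin t ^ 2 + C * sin t ^ 4"
    proof -
      have h: "cos t * cos t + sin t * sin t = 1" by (rule sin_cos_squared_add3)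
      show ?thesis apply (simp add: power2_eq_square power3_eq_cube power4_eq_xxxx field_simps)
        using h by algebra
    qed
    have "(F has_real_derivative (A + B * sin t ^ 2 + C * sin t ^ 4)) (at t)"
      using d unfolding eq .
    then show "(F has_vector_derivative A + B * sin t ^ 2 + C * sin t ^ 4) (at t within {0..pi / 2})"
      unfolding has_real_derivative_iff_has_vector_derivative[symmetric] by (rule has_field_derivative_at_within)
  qed simp
  moreover have "F (pi/2) - F 0 = A*pi/2 + B*pi/4 + C*3*pi/16" unfolding F_def by (simp add: field_simps)
  ultimately show ?thesis by simp
qed

locale pp =
  fixes c1 c3 c5 m :: real
  assumes m_pos: "m > 0" and Pd_ge: "\<And>u. c1 + 3*c3*u^2 + 5*c5*u^4 \<ge> m" and c5_pos: "c5 > 0"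
begin

definition P :: "real \<Rightarrow> real" where "P u = c1*u + c3*u^3 + c5*u^5"
definition Pd :: "real \<Rightarrow> real" where "Pd u = c1 + 3*c3*u^2 + 5*c5*u^4"
definition Pdd :: "real \<Rightarrow> real" where "Pdd u = 6*c3*u + 20*c5*u^3"
definition U :: "real \<Rightarrow> real" where "U y = (THE u. P u = y)"
definition V :: "real \<Rightarrow> real" where "V y = (U y)^2"

lemma Pd_pos: "Pd u > 0" using Pd_ge[of u] m_pos unfolding Pd_def by linarith

lemma P_deriv: "(P has_real_derivative Pd u) (at u)"
  unfolding P_def Pd_def by (auto intro!: derivative_eq_intros simp: algebra_simps)

lemma Pd_deriv: "(Pd has_real_derivative Pdd u) (at u)"
  unfolding Pdd_def Pd_def by (auto intro!: derivative_eq_intros simp: algebra_simps)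

lemma P_cont: "isCont P u" using P_deriv DERIV_isCont by blast

lemma P_strict: "x < y \<Longrightarrow> P x < P y"
  by (rule DERIV_pos_imp_increasing) (use P_deriv Pd_pos in blast)+

lemma P_inj: "P x = P y \<Longrightarrow> x = y"
  using P_strict by (metis less_irrefl linorder_neqE_linordered_idom)

lemma P_odd: "P (-u) = - P u" unfolding P_def by (simp add: power_minus_odd)
lemma P_0: "P 0 = 0" unfolding P_def by simp

lemma P_lower: assumes "u \<ge> 0" shows "P u \<ge> m * u"
proof -
  have "(\<lambda>u. P u - m*u) 0 \<le> (\<lambda>u. P u - m*u) u"
  proof (rule DERIV_nonneg_imp_nondecreasing[OF assms])
    fix x assume "0 \<le> x" "x \<le> u"
    show "\<exists>y. ((\<lambda>u. P u - m*u) has_real_derivative y) (at x) \<and> 0 \<le> y"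
      using P_deriv[of x] Pd_ge[of x] unfolding Pd_def
      by (intro exI[of _ "Pd x - m"]) (auto intro!: derivative_eq_intros simp: Pd_def)
  qed
  then show ?thesis by (simp add: P_0)
qed

lemma P_surj_nonneg: assumes "y \<ge> 0" shows "\<exists>u. P u = y"
proof -
  have "P (y/m) \<ge> m * (y/m)" using P_lower[of "y/m"] assms m_pos by (simp add: divide_nonneg_pos)
  then have "P (y/m) \<ge> y" using m_pos by simp
  then show ?thesis using IVT[of P 0 y "y/m"] assms m_pos P_cont P_0 by force
qed

lemma P_surj: "\<exists>u. P u = y"
proof (cases "y \<ge> 0")
  case True then show ?thesis using P_surj_nonneg by blast
next
  case False
  then obtain u where "P u = -y" using P_surj_nonneg[of "-y"] by auto
  then have "P (-u) = y" by (simp add: P_odd)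
  then show ?thesis by blast
qed

lemma PU: "P (U y) = y"
  unfolding U_def by (rule theI') (use P_surj P_inj in blast)

lemma UP: "U (P u) = u" using PU P_inj by blast

lemma U_0: "U 0 = 0" using UP[of 0] P_0 by simp
lemma U_odd: "U (-y) = - U y" using UP[of "- U y"] by (simp add: P_odd PU)

lemma U_mono: "x \<le> y \<Longrightarrow> U x \<le> U y"
  using P_strict PU by (metis not_le order.strict_iff_not)
lemma U_strict: "x < y \<Longrightarrow> U x < U y"
  using P_inj PU U_mono by (metis le_less not_less)

lemma U_deriv: "(U has_real_derivative inverse (Pd (U y))) (at y)"
proof (rule has_field_derivative_inverse_strong_x[where S=UNIV and f=P])
  show "(P has_real_derivative Pd (U y)) (at (U y))" by (rule P_deriv)
  show "Pd (U y) \<noteq> 0" using Pd_pos[of "U y"] by simp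
  show "continuous_on UNIV P" using P_cont by (simp add: continuous_on_eq_continuous_at)
  show "P (U y) = y" by (rule PU)
  show "\<And>z. z \<in> UNIV \<Longrightarrow> U (P z) = z" by (rule UP)
qed auto

lemma U_cont: "isCont U y" using U_deriv DERIV_isCont by blast

lemma U_sign_pos: "y > 0 \<Longrightarrow> U y > 0" using U_strict[of 0 y] U_0 by simp
lemma U_sign_neg: "y < 0 \<Longrightarrow> U y < 0" using U_strict[of y 0] U_0 by simp

lemma V_deriv: "(V has_real_derivative 2 * U y / Pd (U y)) (at y)"
  unfolding V_def using U_deriv[of y]
  by (auto intro!: derivative_eq_intros simp: field_simps)

lemma deriv_V: "deriv V = (\<lambda>y. 2 * U y / Pd (U y))"
  using V_deriv DERIV_imp_deriv by blast

lemma V_nonneg: "V y \<ge> 0" unfolding V_def by simp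
lemma V_0: "V 0 = 0" unfolding V_def by (simp add: U_0)
lemma V_even: "V (-y) = V y" unfolding V_def by (simp add: U_odd)

lemma V_sign: "y \<noteq> 0 \<Longrightarrow> y * deriv V y > 0"
  unfolding deriv_V using Pd_pos[of "U y"] U_sign_pos[of y] U_sign_neg[of y]
  by (cases "y > 0") (auto intro!: mult_pos_pos mult_neg_neg divide_pos_pos divide_neg_pos)

lemma V_top: "filterlim V at_top at_top"
  unfolding filterlim_at_top
proof
  fix Z :: real
  let ?M = "\<bar>Z\<bar> + 1"
  show "eventually (\<lambda>y. Z \<le> V y) at_top"
    unfolding eventually_at_top_linorder
  proof (intro exI allI impI)
    fix y assume "y \<ge> P ?M"
    then have "U y \<ge> ?M" using U_mono[of "P ?M" y] UP by simp
    then have "U y * U y \<ge> ?M * ?M" by (intro mult_mono) auto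
    moreover have "?M * ?M \<ge> ?M" by (intro mult_le_cancel_left1[THEN iffD2] ) auto
    ultimately show "Z \<le> V y" unfolding V_def power2_eq_square by linarith
  qed
qed

lemma V_bot: "filterlim V at_top at_bot"
  unfolding filterlim_at_top
proof
  fix Z :: real
  let ?M = "\<bar>Z\<bar> + 1"
  show "eventually (\<lambda>y. Z \<le> V y) at_bot"
    unfolding eventually_at_bot_linorder
  proof (intro exI allI impI)
    fix y assume "y \<le> P (- ?M)"
    then have "U y \<le> - ?M" using U_mono[of y "P (-?M)"] UP by simp
    then have "(-U y) * (-U y) \<ge> ?M * ?M" by (intro mult_mono) auto
    moreover have "?M * ?M \<ge> ?M" by (intro mult_le_cancel_left1[THEN iffD2] ) auto
    ultimately show "Z \<le> V y" unfolding V_def power2_eq_square by linarith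
  qed
qed

lemma derivV_deriv0: "(deriv V has_real_derivative 2 / (Pd 0)^2) (at 0)"
proof -
  have "((\<lambda>y. 2 * U y / Pd (U y)) has_real_derivative
     ((2 * inverse (Pd (U 0))) * Pd (U 0) - 2 * U 0 * (Pdd (U 0) * inverse (Pd (U 0)))) / (Pd (U 0) * Pd (U 0))) (at 0)"
    using U_deriv[of 0] Pd_pos[of "U 0"] DERIV_chain2[OF Pd_deriv U_deriv[of 0]]
    by (intro derivative_eq_intros) (auto)
  then show ?thesis unfolding deriv_V using Pd_pos[of 0] by (simp add: U_0 power2_eq_square field_simps)
qed

lemma deriv2_V0: "(deriv ^^ 2) V 0 = 2 / c1^2"
  using DERIV_imp_deriv[OF derivV_deriv0] by (simp add: Pd_def numeral_2_eq_2)

lemma c1_pos: "c1 > 0" using Pd_pos[of 0] by (simp add: Pd_def)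

lemma deg0_V: "deg0 V = 2"
  unfolding deg0_def
proof (rule Least_equality)
  show "(deriv ^^ 2) V 0 \<noteq> 0" using deriv2_V0 c1_pos by simp
  fix k assume "(deriv ^^ k) V 0 \<noteq> 0"
  moreover have "(deriv ^^ 0) V 0 = 0" by (simp add: V_0)
  moreover have "(deriv ^^ 1) V 0 = 0" by (simp add: deriv_V U_0)
  ultimately show "2 \<le> k" by (cases k; cases "k - 1"; auto)
qed

lemma V_not_quadratic: "\<not> quadratic_fun V"
proof
  assume "quadratic_fun V"
  then obtain c where c: "\<And>y. V y = c * y^2" unfolding quadratic_fun_def by blast
  have key: "u^2 = c * (P u)^2" for u using c[of "P u"] by (simp add: V_def UP)
  have p1: "P 1 > 0" using P_strict[of 0 1] P_0 by simp
  have "P 2 > 0" "P 3 > 0" using P_strict[of 0 2] P_strict[of 0 3] P_0 by auto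
  have "4 * (c * (P 1)^2) = c * (P 2)^2" using key[of 1] key[of 2] by simp
  then have "(2 * P 1)^2 = (P 2)^2 \<or> c = 0" by (auto simp: power2_eq_square algebra_simps)
  moreover have "c \<noteq> 0" using key[of 1] by auto
  ultimately have e2: "2 * P 1 = P 2" using \<open>P 2 > 0\<close> p1 by (metis abs_of_pos power2_eq_iff_nonneg less_imp_le mult_pos_pos zero_less_numeral)
  have "9 * (c * (P 1)^2) = c * (P 3)^2" using key[of 1] key[of 3] by simp
  then have "(3 * P 1)^2 = (P 3)^2" using \<open>c \<noteq> 0\<close> by (auto simp: power2_eq_square algebra_simps)
  then have e3: "3 * P 1 = P 3" using \<open>P 3 > 0\<close> p1 by (metis power2_eq_iff_nonneg less_imp_le mult_pos_pos zero_less_numeral)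
  from e2 e3 have "c5 = 0" unfolding P_def by (simp add: algebra_simps)
  then show False using c5_pos by simp
qed

definition Pc :: "complex \<Rightarrow> complex" where
  "Pc z = of_real c1 * z + of_real c3 * z^3 + of_real c5 * z^5"

lemma Pc_deriv: "(Pc has_field_derivative (of_real c1 + 3 * of_real c3 * z^2 + 5 * of_real c5 * z^4)) (at z)"
  unfolding Pc_def by (auto intro!: derivative_eq_intros simp: algebra_simps)

lemma Pc_hol: "Pc holomorphic_on S"
  unfolding Pc_def by (intro holomorphic_intros)

lemma Pc_real: "Pc (of_real u) = of_real (P u)"
  unfolding Pc_def P_def by simp

lemma V_analytic: "real_analytic V"
  unfolding real_analytic_def
proof
  fix x :: real
  define \<xi> where "\<xi> = complex_of_real (U x)"
  have dz: "deriv Pc \<xi> \<noteq> 0"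
  proof -
    have "deriv Pc \<xi> = of_real (Pd (U x))"
      using DERIV_imp_deriv[OF Pc_deriv[of \<xi>]] unfolding \<xi>_def Pd_def by simp
    then show ?thesis using Pd_pos[of "U x"] by simp
  qed
  obtain r where r: "r > 0" "inj_on Pc (ball \<xi> r)"
    using has_complex_derivative_locally_injective[OF Pc_hol[of UNIV] _ _ dz] by auto
  obtain G where G: "G holomorphic_on (Pc ` ball \<xi> r)" "\<And>z. z \<in> ball \<xi> r \<Longrightarrow> G (Pc z) = z"
    using holomorphic_has_inverse[OF Pc_hol open_ball r(2)] by metis
  have op: "open (Pc ` ball \<xi> r)" by (rule open_mapping_thm3[OF Pc_hol open_ball r(2)])
  have "Pc \<xi> = of_real x" unfolding \<xi>_def Pc_real PU ..
  then have "of_real x \<in> Pc ` ball \<xi> r" using r(1) by (metis centre_in_ball imageI)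
  then obtain \<rho> where \<rho>: "\<rho> > 0" "ball (of_real x) \<rho> \<subseteq> Pc ` ball \<xi> r"
    using op openE by blast
  obtain \<delta> where \<delta>: "\<delta> > 0" "\<And>y. dist y x < \<delta> \<Longrightarrow> dist (U y) (U x) < r"
    using U_cont[of x] r(1) unfolding continuous_at_eps_delta by blast
  define d where "d = min \<rho> \<delta>"
  have d: "d > 0" using \<rho> \<delta> by (simp add: d_def)
  define H where "H z = (G z)^2" for z
  have Hhol: "H holomorphic_on ball (of_real x) d"
    unfolding H_def
    by (intro holomorphic_intros holomorphic_on_subset[OF G(1)]) (use \<rho> in \<open>auto simp: d_def\<close>)
  have GU: "G (of_real y) = of_real (U y)" if "\<bar>y - x\<bar> < d" for y
  proof -
    have "of_real (U y) \<in> ball \<xi> r"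
      using \<delta>(2)[of y] that unfolding \<xi>_def d_def
      by (simp add: dist_norm dist_real_def flip: of_real_diff)
    from G(2)[OF this] show ?thesis by (simp add: Pc_real PU)
  qed
  define c where "c n = Re ((deriv ^^ n) H (of_real x) / fact n)" for n
  show "\<exists>r>0. \<exists>c::nat \<Rightarrow> real. \<forall>y. \<bar>y - x\<bar> < r \<longrightarrow> (\<lambda>n. c n * (y - x) ^ n) sums V y"
  proof (intro exI[of _ d] conjI d exI[of _ c] allI impI)
    fix y assume y: "\<bar>y - x\<bar> < d"
    have "complex_of_real y \<in> ball (of_real x) d" using y by (simp add: dist_norm flip: of_real_diff)
    from holomorphic_power_series[OF Hhol this]
    have "(\<lambda>n. (deriv ^^ n) H (of_real x) / fact n * (of_real y - of_real x)^n) sums H (of_real y)" .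
    then have "(\<lambda>n. Re ((deriv ^^ n) H (of_real x) / fact n * (of_real y - of_real x)^n)) sums Re (H (of_real y))"
      by (subst (asm) sums_complex_iff) (rule conjunct1)
    moreover have "Re (H (of_real y)) = V y" unfolding H_def GU[OF y] V_def by simp
    moreover have "Re ((deriv ^^ n) H (of_real x) / fact n * (of_real y - of_real x)^n) = c n * (y - x)^n" for n
    proof -
      have "(complex_of_real y - of_real x)^n = of_real ((y - x)^n)" by simp
      moreover have "\<And>a t. Re (a * complex_of_real t) = Re a * t" by simp
      ultimately show ?thesis unfolding c_def by (simp only:)
    qed
    ultimately show "(\<lambda>n. c n * (y - x) ^ n) sums V y" by simp
  qed
qed

lemma V_UM: "UM V"
  unfolding UM_def using V_analytic V_nonneg V_0 V_sign V_top V_bot by blast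

lemma P_mono: "x \<le> y \<Longrightarrow> P x \<le> P y" by (metis P_strict less_eq_real_def)

lemma Vinv_eq: assumes "\<theta> \<ge> 0" shows "Vinv V \<theta> = P (sqrt \<theta>)"
  unfolding Vinv_def
proof (rule the_equality)
  show "0 \<le> P (sqrt \<theta>) \<and> V (P (sqrt \<theta>)) = \<theta>"
    using P_mono[of 0 "sqrt \<theta>"] assms by (simp add: P_0 V_def UP)
  fix y assume y: "0 \<le> y \<and> V y = \<theta>"
  then have "U y \<ge> 0" using U_mono[of 0 y] U_0 by simp
  then have "U y = sqrt \<theta>" using y unfolding V_def by auto
  then show "y = P (sqrt \<theta>)" using PU[of y] by simp
qed

lemma V_cont: "continuous_on UNIV V"
  using V_deriv by (meson DERIV_isCont continuous_at_imp_continuous_on)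

lemma V_meas[measurable]: "V \<in> borel_measurable borel"
  using V_cont by (rule borel_measurable_continuous_onI)

lemma Pd_cont: "continuous_on S Pd" unfolding Pd_def by (intro continuous_intros)

lemma a_val:
  assumes th: "\<theta> > 0"
  shows "a_fun V \<theta> = pi / (2 * sqrt 2) * (c1 + 3/2 * c3 * \<theta> + 15/8 * c5 * \<theta>^2)"
proof -
  define b where "b = P (sqrt \<theta>)"
  define f where "f y = 1 / (sqrt 2 * sqrt (\<theta> - V y))" for y
  define g where "g t = P (sqrt \<theta> * sin t)" for t
  define g' where "g' t = Pd (sqrt \<theta> * sin t) * (sqrt \<theta> * cos t)" for t
  define h where "h t = Pd (sqrt \<theta> * sin t) / sqrt 2" for t
  define I where "I = pi / (2 * sqrt 2) * (c1 + 3/2 * c3 * \<theta> + 15/8 * c5 * \<theta>^2)"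
  have fm[measurable]: "f \<in> borel_measurable borel" unfolding f_def by measurable
  have step1: "a_fun V \<theta> = enn2real (\<integral>\<^sup>+y. ennreal (f y * indicator {0..b} y) \<partial>lborel)"
  proof -
    have "a_fun V \<theta> = (LINT y|lborel. indicator {0..b} y *\<^sub>R f y)"
      unfolding a_fun_def Vinv_eq[OF less_imp_le[OF th]] set_lebesgue_integral_def b_def f_def ..
    also have "\<dots> = enn2real (\<integral>\<^sup>+y. ennreal (indicator {0..b} y *\<^sub>R f y) \<partial>lborel)"
    proof (rule integral_eq_nn_integral)
      show "AE y in lborel. 0 \<le> indicator {0..b} y *\<^sub>R f y"
      proof (rule AE_I2)
        fix y
        show "0 \<le> indicator {0..b} y *\<^sub>R f y"
        proof (cases "y \<in> {0..b}")
          case True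
          then have "U y \<ge> 0" "U y \<le> sqrt \<theta>" using U_mono[of 0 y] U_mono[of y b] U_0 UP
            unfolding b_def by auto
          then have "V y \<le> \<theta>" unfolding V_def using th
            by (metis abs_of_nonneg real_sqrt_abs real_sqrt_le_iff less_imp_le)
          then show ?thesis using True unfolding f_def by auto
        qed simp
      qed
    qed simp
    finally show ?thesis by (simp add: mult.commute)
  qed
  have g0: "g 0 = 0" "g (pi/2) = b" unfolding g_def b_def by (simp_all add: P_0)
  have step2: "(\<integral>\<^sup>+y. ennreal (f y * indicator {g 0..g (pi/2)} y) \<partial>lborel) =
      (\<integral>\<^sup>+t. ennreal (f (g t) * g' t * indicator {0..pi/2} t) \<partial>lborel)"
  proof (rule nn_integral_substitution)
    show "set_borel_measurable borel {g 0..g (pi / 2)} f" unfolding set_borel_measurable_def by measurable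
    fix t
    show "(g has_real_derivative g' t) (at t)"
      unfolding g_def g'_def by (auto intro!: derivative_eq_intros DERIV_chain2[OF P_deriv])
    assume "t \<in> {0..pi/2}"
    then have "cos t \<ge> 0" by (intro cos_ge_zero) auto
    then show "0 \<le> g' t" unfolding g'_def using Pd_pos[of "sqrt \<theta> * sin t"] th
      by (intro mult_nonneg_nonneg) auto
  next
    show "continuous_on {0..pi / 2} g'" unfolding g'_def
      by (intro continuous_intros continuous_on_compose2[OF Pd_cont[of UNIV]]) auto
  qed simp
  have step3: "(\<integral>\<^sup>+t. ennreal (f (g t) * g' t * indicator {0..pi/2} t) \<partial>lborel) =
      (\<integral>\<^sup>+t. ennreal (indicator {0..pi/2} t * h t) \<partial>lborel)"
  proof (rule nn_integral_cong_AE)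
    show "AE t in lborel. ennreal (f (g t) * g' t * indicator {0..pi/2} t) = ennreal (indicator {0..pi/2} t * h t)"
      using AE_lborel_singleton[of "pi/2"]
    proof eventually_elim
      case (elim t)
      show ?case
      proof (cases "t \<in> {0..pi/2}")
        case False then show ?thesis by simp
      next
        case True
        with elim have "0 \<le> t" "t < pi/2" by auto
        then have cpos: "cos t > 0" by (intro cos_gt_zero_pi) auto
        have "\<theta> - V (g t) = \<theta> * (cos t)^2"
          unfolding g_def V_def UP using th by (simp add: power_mult_distrib cos_squared_eq algebra_simps)
        then have "sqrt (\<theta> - V (g t)) = sqrt \<theta> * cos t"
          using cpos th by (simp add: real_sqrt_mult)
        then have "f (g t) * g' t = h t"
          unfolding f_def g'_def h_def using cpos th by (simp add: field_simps)
        then show ?thesis using True by simp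
      qed
    qed
  qed
  have hint: "(h has_integral I) {0..pi/2}"
  proof -
    have "h = (\<lambda>t. c1 / sqrt 2 + (3 * c3 * \<theta> / sqrt 2) * sin t ^ 2 + (5 * c5 * \<theta>^2 / sqrt 2) * sin t ^ 4)"
    proof
      fix t
      have e2: "(sqrt \<theta> * sin t)^2 = \<theta> * sin t ^ 2" using th by (simp add: power_mult_distrib)
      have e4: "(sqrt \<theta> * sin t)^4 = \<theta>^2 * sin t ^ 4"
      proof -
        have "(sqrt \<theta> * sin t)^4 = ((sqrt \<theta> * sin t)^2)^2" by simp
        then show ?thesis unfolding e2 by (simp add: power_mult_distrib)
      qed
      show "h t = c1 / sqrt 2 + (3 * c3 * \<theta> / sqrt 2) * sin t ^ 2 + (5 * c5 * \<theta>^2 / sqrt 2) * sin t ^ 4"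
        unfolding h_def Pd_def e2 e4 by (simp add: add_divide_distrib)
    qed
    moreover have "c1 / sqrt 2 * pi / 2 + (3 * c3 * \<theta> / sqrt 2) * pi / 4 + (5 * c5 * \<theta>^2 / sqrt 2) * 3 * pi / 16 = I"
      unfolding I_def by (simp add: field_simps)
    ultimately show ?thesis using trig_int[of "c1 / sqrt 2" "3 * c3 * \<theta> / sqrt 2" "5 * c5 * \<theta>^2 / sqrt 2"] by simp
  qed
  have hnn: "\<And>t. h t \<ge> 0" unfolding h_def using Pd_pos by (simp add: less_imp_le)
  have step4: "(\<integral>\<^sup>+t. ennreal (indicator {0..pi/2} t * h t) \<partial>lborel) = ennreal I"
    by (rule nn_integral_has_integral_lebesgue[OF _ hint]) (use hnn in auto)
  have Inn: "I \<ge> 0" using has_integral_nonneg[OF hint] hnn by auto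
  show ?thesis
    using step1 step2 step3 step4 Inn g0 unfolding I_def[symmetric] by simp
qed

end

lemma sqrt2_irr: "sqrt 2 \<notin> \<rat>"
proof
  assume "sqrt 2 \<in> \<rat>"
  then obtain m n :: nat where n: "n \<noteq> 0" and e: "\<bar>sqrt 2\<bar> = real m / real n" and cop: "coprime m n"
    by (rule Rats_abs_nat_div_natE)
  then have "sqrt 2 * real n = real m" by simp
  then have "(sqrt 2 * real n)^2 = (real m)^2" by simp
  then have "2 * (real n)^2 = (real m)^2" by (simp add: power_mult_distrib)
  then have "real (2 * n^2) = real (m^2)" by simp
  then have eq: "2 * n^2 = m^2" by (simp only: of_nat_eq_iff)
  then have "even (m^2)" by (simp flip: eq)
  then have "even m" by simp
  then obtain k where k: "m = 2 * k" by blast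
  then have "2 * n^2 = 4 * k^2" using eq by (simp add: power_mult_distrib)
  then have "n^2 = 2 * k^2" by simp
  then have "even (n^2)" by simp
  then have "even n" by simp
  with \<open>even m\<close> cop show False using coprime_common_divisor_nat[of m n 2] by simp
qed

theorem mainTheorem19:
  fixes E :: real
  assumes "E > 0"
  shows "\<exists>V1 V2. UM V1 \<and> UM V2 \<and> even_fun V1 \<and> even_fun V2 \<and>
           \<not> quadratic_fun V1 \<and> \<not> quadratic_fun V2 \<and>
           deg0 V1 = 2 \<and> deg0 V2 = 2 \<and>
           (\<forall>\<theta>\<in>{0<..<E}. a_fun V1 \<theta> = b_fun V2 E \<theta>) \<and>
           sqrt ((deriv ^^ 2) V2 0 / (deriv ^^ 2) V1 0) \<notin> \<rat>"
proof -
  define \<alpha> where "\<alpha> = sqrt 2 * E^2"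
  have E2: "E^2 > 0" using assms by simp
  have s2: "sqrt 2 > 1" by simp
  have \<alpha>pos: "\<alpha> > 0" unfolding \<alpha>_def using E2 by simp
  have \<alpha>big: "\<alpha> - E^2/2 > 0"
  proof -
    have "\<alpha> - E^2/2 = (sqrt 2 - 1/2) * E^2" unfolding \<alpha>_def by (simp add: algebra_simps)
    moreover have "sqrt 2 - 1/2 > 0" using s2 by linarith
    ultimately show ?thesis using E2 by simp
  qed
  interpret V1: pp \<alpha> 0 "8/15" \<alpha>
  proof
    fix u :: real
    show "\<alpha> + 3 * 0 * u^2 + 5 * (8/15) * u^4 \<ge> \<alpha>" by simp
  qed (use \<alpha>pos in auto)
  interpret V2: pp "\<alpha> + E^2" "-4*E/3" "8/15" "\<alpha> - E^2/2"
  proof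
    fix u :: real
    have "\<alpha> + E^2 + 3 * (-4*E/3) * u^2 + 5 * (8/15) * u^4 = 8/3 * (u^2 - 3*E/4)^2 + (\<alpha> - E^2/2)"
      by (simp add: power2_eq_square power4_eq_xxxx algebra_simps)
    then show "\<alpha> + E^2 + 3 * (-4*E/3) * u^2 + 5 * (8/15) * u^4 \<ge> \<alpha> - E^2/2" by simp
  qed (use \<alpha>big in auto)
  have f1: "UM V1.V" "UM V2.V" by (rule V1.V_UM V2.V_UM)+
  have f2: "even_fun V1.V" "even_fun V2.V" unfolding even_fun_def by (rule allI, rule V1.V_even V2.V_even)+
  have f3: "\<not> quadratic_fun V1.V" "\<not> quadratic_fun V2.V" by (rule V1.V_not_quadratic V2.V_not_quadratic)+
  have f4: "deg0 V1.V = 2" "deg0 V2.V = 2" by (rule V1.deg0_V V2.deg0_V)+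
  have f5: "\<forall>\<theta>\<in>{0<..<E}. a_fun V1.V \<theta> = b_fun V2.V E \<theta>"
  proof
    fix \<theta> assume th: "\<theta> \<in> {0<..<E}"
    have "b_fun V2.V E \<theta> = a_fun V2.V (E - \<theta>)" unfolding a_fun_def b_fun_def ..
    also have "\<dots> = pi / (2 * sqrt 2) * (\<alpha> + E^2 + 3/2 * (-4*E/3) * (E - \<theta>) + 15/8 * (8/15) * (E - \<theta>)^2)"
      by (rule V2.a_val) (use th in auto)
    also have "\<dots> = pi / (2 * sqrt 2) * (\<alpha> + 3/2 * 0 * \<theta> + 15/8 * (8/15) * \<theta>^2)"
      by (simp add: power2_eq_square algebra_simps)
    also have "\<dots> = a_fun V1.V \<theta>"
      by (rule V1.a_val[symmetric]) (use th in auto)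
    finally show "a_fun V1.V \<theta> = b_fun V2.V E \<theta>" ..
  qed
  have f6: "sqrt ((deriv ^^ 2) V2.V 0 / (deriv ^^ 2) V1.V 0) \<notin> \<rat>"
  proof -
    have r: "sqrt ((deriv ^^ 2) V2.V 0 / (deriv ^^ 2) V1.V 0) = \<alpha> / (\<alpha> + E^2)"
    proof -
      have "(deriv ^^ 2) V2.V 0 / (deriv ^^ 2) V1.V 0 = (\<alpha> / (\<alpha> + E^2))^2"
      proof -
        have g: "\<And>a b :: real. a \<noteq> 0 \<Longrightarrow> b \<noteq> 0 \<Longrightarrow> 2 / a^2 / (2 / b^2) = (b / a)^2"
          by (simp add: field_simps power2_eq_square)
        show ?thesis unfolding V1.deriv2_V0 V2.deriv2_V0 using \<alpha>pos E2 by (intro g) (auto simp: add_pos_pos[THEN less_imp_neq, THEN not_sym])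
      qed
      then show ?thesis using \<alpha>pos E2 by simp
    qed
    show "sqrt ((deriv ^^ 2) V2.V 0 / (deriv ^^ 2) V1.V 0) \<notin> \<rat>"
    proof
      assume "sqrt ((deriv ^^ 2) V2.V 0 / (deriv ^^ 2) V1.V 0) \<in> \<rat>"
      then have q: "\<alpha> / (\<alpha> + E^2) \<in> \<rat>" using r by simp
      have "\<alpha> / (\<alpha> + E^2) = (sqrt 2 * E^2) / ((sqrt 2 + 1) * E^2)" unfolding \<alpha>_def
        by (simp add: algebra_simps)
      also have "\<dots> = sqrt 2 / (sqrt 2 + 1)" using E2 by (rule mult_divide_mult_cancel_right[OF less_imp_neq[THEN not_sym]])
      finally have "\<alpha> / (\<alpha> + E^2) = sqrt 2 / (sqrt 2 + 1)" .
      then have q2: "sqrt 2 / (sqrt 2 + 1) \<in> \<rat>" using q by simp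
      define q where "q = sqrt 2 / (sqrt 2 + 1)"
      have nz: "sqrt 2 + 1 > 0" by (simp add: add_pos_pos)
      have "1 - q = 1 / (sqrt 2 + 1)" unfolding q_def using nz by (simp add: field_simps)
      then have "sqrt 2 = q / (1 - q)" unfolding q_def using nz by simp
      moreover have "q / (1 - q) \<in> \<rat>" using q2 unfolding q_def[symmetric] by (intro Rats_divide Rats_diff) auto
      ultimately show False using sqrt2_irr by simp
    qed
  qed
  show ?thesis
    by (rule exI[of _ V1.V], rule exI[of _ V2.V], intro conjI f1 f2 f3 f4 f5 f6)
qed

end
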